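(* Let $T$ be an $n$-dimensional simplex in $\mathbb{R}^n$, and let $Q$ be a polytope in $\mathbb{R}^n$ having at most $n$ vertices. Suppose that, for every unit vector $u$, there exists $v \in u^\perp$ such that $Q_u + v \subseteq T_u$. Then there exists $v_0 \in \mathbb{R}^n$ such that $Q + v_0 \subseteq T$.
   Context: For a unit vector $u$ and a set $S\subseteq\mathbb{R}^n$, $S_u$ denotes the orthogonal projection of $S$ onto the hyperplane $u^\perp$. *)

theory Defs
  imports "HOL-Analysis.Analysis"
begin

definition proj_perp :: "'a::euclidean_space \<Rightarrow> 'a set \<Rightarrow> 'a set" where
  "proj_perp u S = (\<lambda>x. x - (x \<bullet> u) *\<^sub>R u) ` S"

end

theory Submission
  imports Defs
begin

lemma lin_repr:
  fixes f :: "'a::euclidean_space \<Rightarrow> real"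
  assumes "linear f"
  shows "f x = (\<Sum>b\<in>Basis. f b *\<^sub>R b) \<bullet> x"
proof -
  have "f x = f (\<Sum>b\<in>Basis. (x \<bullet> b) *\<^sub>R b)" by (simp add: euclidean_representation)
  also have "\<dots> = (\<Sum>b\<in>Basis. (x \<bullet> b) * f b)"
    using assms by (simp add: linear_sum linear_scale)
  also have "\<dots> = (\<Sum>b\<in>Basis. f b *\<^sub>R b) \<bullet> x"
    by (simp add: inner_sum_left mult.commute inner_commute[of x])
  finally show ?thesis .
qed

theorem lemma2p4:
  fixes T Q :: "'a::euclidean_space set"
  assumes "int DIM('a) simplex T"
    and "polytope Q"
    and "card {x. x extreme_point_of Q} \<le> DIM('a)"
    and "\<forall>u. norm u = 1 \<longrightarrow>
           (\<exists>v. v \<bullet> u = 0 \<and> (\<lambda>x. x + v) ` proj_perp u Q \<subseteq> proj_perp u T)"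
  shows "\<exists>v0. (\<lambda>x. x + v0) ` Q \<subseteq> T"
proof (cases "Q = {}")
  case True
  then show ?thesis by auto
next
  case Qne: False
  obtain C where indep: "\<not> affine_dependent C" and cardC: "int (card C) = int DIM('a) + 1"
    and TC: "T = convex hull C"
    using assms(1) unfolding simplex_def by blast
  have finC: "finite C" using indep aff_independent_finite by blast
  have "aff_dim C = int DIM('a)" using aff_dim_affine_independent[OF indep] cardC by simp
  then have affC: "affine hull C = UNIV" using aff_dim_eq_full by blast
  have ex: "\<exists>w. sum w C = 1 \<and> (\<Sum>d\<in>C. w d *\<^sub>R d) = x" for x
    using affC affine_hull_finite[OF finC] by blast
  have uniq: "w d = w' d" if "sum w C = 1" "sum w' C = 1"
      "(\<Sum>d\<in>C. w d *\<^sub>R d) = (\<Sum>d\<in>C. w' d *\<^sub>R d)" "d \<in> C" for w w' d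
  proof (rule ccontr)
    assume ne: "w d \<noteq> w' d"
    have "sum (\<lambda>d. w d - w' d) C = 0" using that by (simp add: sum_subtractf)
    moreover have "(\<Sum>d\<in>C. (w d - w' d) *\<^sub>R d) = 0"
      using that by (simp add: scaleR_diff_left sum_subtractf)
    ultimately have "affine_dependent C"
      using ne \<open>d \<in> C\<close> affine_dependent_explicit_finite[OF finC] by force
    with indep show False by blast
  qed
  define bb where "bb x = (SOME w. sum w C = 1 \<and> (\<Sum>d\<in>C. w d *\<^sub>R d) = x)" for x
  have bb: "sum (bb x) C = 1 \<and> (\<Sum>d\<in>C. bb x d *\<^sub>R d) = x" for x
    unfolding bb_def using someI_ex[OF ex[of x]] .
  have bbu: "bb x d = w d" if "sum w C = 1" "(\<Sum>d\<in>C. w d *\<^sub>R d) = x" "d \<in> C" for x w d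
    using uniq[of "bb x" w d] bb[of x] that by auto
  define ll where "ll c x = bb x c - bb 0 c" for c x
  have lin: "linear (ll c)" if "c \<in> C" for c
  proof (rule linearI)
    fix x y
    have "bb (x + y) c = bb x c + bb y c - bb 0 c"
    proof (rule bbu[where w="\<lambda>d. bb x d + bb y d - bb 0 d"])
      show "sum (\<lambda>d. bb x d + bb y d - bb 0 d) C = 1"
        using bb by (simp add: sum.distrib sum_subtractf)
      show "(\<Sum>d\<in>C. (bb x d + bb y d - bb 0 d) *\<^sub>R d) = x + y"
        using bb[of x] bb[of y] bb[of 0]
        by (simp add: scaleR_add_left scaleR_diff_left sum.distrib sum_subtractf)
    qed fact
    then show "ll c (x + y) = ll c x + ll c y" unfolding ll_def by simp
  next
    fix r :: real and x
    have "bb (r *\<^sub>R x) c = r * bb x c + (1 - r) * bb 0 c"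
    proof (rule bbu[where w="\<lambda>d. r * bb x d + (1 - r) * bb 0 d"])
      show "sum (\<lambda>d. r * bb x d + (1 - r) * bb 0 d) C = 1"
        using bb[of x] bb[of 0] by (simp add: sum.distrib sum_distrib_left[symmetric])
      show "(\<Sum>d\<in>C. (r * bb x d + (1 - r) * bb 0 d) *\<^sub>R d) = r *\<^sub>R x"
        using bb[of x] bb[of 0]
        by (simp add: scaleR_add_left sum.distrib scaleR_sum_right[symmetric] flip: scaleR_scaleR)
    qed fact
    then show "ll c (r *\<^sub>R x) = r *\<^sub>R ll c x" unfolding ll_def by (simp add: algebra_simps)
  qed
  define a where "a c = (\<Sum>b\<in>Basis. ll c b *\<^sub>R b)" for c
  have aell: "a c \<bullet> x = bb x c - bb 0 c" if "c \<in> C" for c x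
    using lin_repr[OF lin[OF that], of x] unfolding a_def ll_def by simp
  have asum: "(\<Sum>c\<in>C. a c \<bullet> x) = 0" for x
    using aell bb[of x] bb[of 0] by (simp add: sum_subtractf)
  have bbpos: "0 \<le> bb t c" if "t \<in> T" "c \<in> C" for t c
  proof -
    obtain w where w: "\<forall>x\<in>C. 0 \<le> w x" "sum w C = 1" "(\<Sum>x\<in>C. w x *\<^sub>R x) = t"
      using \<open>t \<in> T\<close> unfolding TC convex_hull_finite[OF finC] by blast
    then show ?thesis using bbu[OF w(2,3) that(2)] that(2) by simp
  qed
  define E where "E = {x. x extreme_point_of Q}"
  have finE: "finite E" unfolding E_def
    using finite_polyhedron_extreme_points polytope_imp_polyhedron assms(2) by blast
  obtain V where "finite V" "Q = convex hull V" using assms(2) unfolding polytope_def by blast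
  then have QE: "Q = convex hull E" unfolding E_def using Krein_Milman_polytope by blast
  have Ene: "E \<noteq> {}" using Qne QE by auto
  have EQ: "E \<subseteq> Q" unfolding E_def by (auto simp: extreme_point_of_def)
  have cardE: "card E \<le> DIM('a)" using assms(3) unfolding E_def .
  define m where "m c = Min ((\<lambda>e. bb e c) ` E)" for c
  have mle: "m c \<le> bb e c" if "e \<in> E" for c e
    unfolding m_def using finE that by simp
  have "\<forall>c. \<exists>e. e \<in> E \<and> bb e c = m c"
  proof
    fix c
    have "m c \<in> (\<lambda>e. bb e c) ` E" unfolding m_def using finE Ene by (intro Min_in) auto
    then show "\<exists>e. e \<in> E \<and> bb e c = m c" by auto
  qed
  then obtain ec where ec: "\<And>c. ec c \<in> E" "\<And>c. bb (ec c) c = m c" by metis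
  have group: "(\<Sum>e\<in>E. \<Sum>c\<in>{c\<in>C. ec c = e}. g c) = (\<Sum>c\<in>C. g c)" for g :: "'a \<Rightarrow> 'b::comm_monoid_add"
    using sum.group[OF finC finE, of ec g] ec(1) by auto
  define A where "A e = (\<Sum>c\<in>{c\<in>C. ec c = e}. a c)" for e
  have msum: "0 \<le> (\<Sum>c\<in>C. m c)"
  proof -
    obtain e0 where e0: "e0 \<in> E" using Ene by blast
    define S where "S = A ` (E - {e0})"
    have finS: "finite S" unfolding S_def using finE by simp
    have "card S \<le> card (E - {e0})" unfolding S_def using finE card_image_le by blast
    also have "\<dots> < DIM('a)" using e0 finE cardE
      by (metis card_Diff1_less le_less_trans nat_less_le)
    finally have "dim S < DIM('a)"
      using dim_le_card[of S S] finS span_superset by (metis le_less_trans subsetI)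
    then obtain u :: 'a where u0: "u \<noteq> 0" and uS: "span S \<subseteq> {x. u \<bullet> x = 0}"
      using lowdim_subset_hyperplane by blast
    have Au1: "A e \<bullet> u = 0" if "e \<in> E - {e0}" for e
      using uS span_superset[of S] that unfolding S_def by (force simp: inner_commute)
    have "(\<Sum>e\<in>E. A e \<bullet> u) = (\<Sum>e\<in>E. \<Sum>c\<in>{c\<in>C. ec c = e}. a c \<bullet> u)"
      unfolding A_def by (simp add: inner_sum_left)
    also have "\<dots> = (\<Sum>c\<in>C. a c \<bullet> u)" by (rule group)
    also have "\<dots> = 0" by (rule asum)
    finally have "(\<Sum>e\<in>E. A e \<bullet> u) = 0" .
    moreover have "(\<Sum>e\<in>E. A e \<bullet> u) = A e0 \<bullet> u + (\<Sum>e\<in>E - {e0}. A e \<bullet> u)"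
      using sum.remove[OF finE e0] .
    ultimately have "A e0 \<bullet> u = 0" using Au1 by simp
    with Au1 have Au: "A e \<bullet> u = 0" if "e \<in> E" for e using that by blast
    define u' where "u' = u /\<^sub>R norm u"
    have nu: "norm u' = 1" unfolding u'_def using u0 by simp
    have Au': "A e \<bullet> u' = 0" if "e \<in> E" for e using Au[OF that] unfolding u'_def by simp
    obtain v where v: "v \<bullet> u' = 0" and sub: "(\<lambda>x. x + v) ` proj_perp u' Q \<subseteq> proj_perp u' T"
      using assms(4) nu by blast
    have "\<exists>t\<in>T. e - (e \<bullet> u') *\<^sub>R u' + v = t - (t \<bullet> u') *\<^sub>R u'" if "e \<in> E" for e
    proof -
      have "e - (e \<bullet> u') *\<^sub>R u' \<in> proj_perp u' Q" using EQ that unfolding proj_perp_def by auto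
      then have "e - (e \<bullet> u') *\<^sub>R u' + v \<in> proj_perp u' T" using sub by auto
      then show ?thesis unfolding proj_perp_def by auto
    qed
    then obtain tt where tt: "\<And>e. e \<in> E \<Longrightarrow> tt e \<in> T"
      "\<And>e. e \<in> E \<Longrightarrow> e - (e \<bullet> u') *\<^sub>R u' + v = tt e - (tt e \<bullet> u') *\<^sub>R u'" by metis
    have eqA: "A e \<bullet> (e + v) = A e \<bullet> tt e" if "e \<in> E" for e
    proof -
      have "A e \<bullet> (e - (e \<bullet> u') *\<^sub>R u' + v) = A e \<bullet> (tt e - (tt e \<bullet> u') *\<^sub>R u')"
        using tt(2)[OF that] by simp
      then show ?thesis using Au'[OF that] by (simp add: inner_diff_right inner_add_right)
    qed
    have "(\<Sum>c\<in>C. m c - bb 0 c) = (\<Sum>c\<in>C. a c \<bullet> ec c)"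
      using aell ec(2) by simp
    also have "\<dots> = (\<Sum>c\<in>C. a c \<bullet> (ec c + v))"
      using asum[of v] by (simp add: inner_add_right sum.distrib)
    also have "\<dots> = (\<Sum>e\<in>E. \<Sum>c\<in>{c\<in>C. ec c = e}. a c \<bullet> (ec c + v))"
      by (rule group[symmetric])
    also have "\<dots> = (\<Sum>e\<in>E. A e \<bullet> (e + v))"
      unfolding A_def inner_sum_left by (intro sum.cong) auto
    also have "\<dots> = (\<Sum>e\<in>E. A e \<bullet> tt e)"
      using eqA by simp
    also have "\<dots> = (\<Sum>e\<in>E. \<Sum>c\<in>{c\<in>C. ec c = e}. a c \<bullet> tt (ec c))"
      unfolding A_def inner_sum_left by (intro sum.cong) auto
    also have "\<dots> = (\<Sum>c\<in>C. a c \<bullet> tt (ec c))"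
      by (rule group)
    also have "\<dots> \<ge> (\<Sum>c\<in>C. - bb 0 c)"
      using aell bbpos tt(1) ec(1) by (intro sum_mono) force
    finally show ?thesis by (simp add: sum_subtractf sum_negf)
  qed
  have "C \<noteq> {}" using cardC by auto
  then obtain c0 where c0: "c0 \<in> C" by blast
  define s where "s = (\<Sum>c\<in>C. m c)"
  define g where "g c = (if c = c0 then s else 0) - m c" for c
  have gsum: "sum g C = 0" unfolding g_def s_def using c0 finC by (simp add: sum_subtractf)
  define v0 where "v0 = (\<Sum>d\<in>C. g d *\<^sub>R d)"
  have inT: "v0 + e \<in> T" if "e \<in> E" for e
  proof -
    have "v0 + e = (\<Sum>d\<in>C. (bb e d + g d) *\<^sub>R d)"
      unfolding v0_def using bb[of e] by (simp add: scaleR_add_left sum.distrib)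
    moreover have "sum (\<lambda>d. bb e d + g d) C = 1" using bb[of e] gsum by (simp add: sum.distrib)
    moreover have "\<forall>d\<in>C. 0 \<le> bb e d + g d"
    proof
      fix d assume "d \<in> C"
      have "m d \<le> bb e d" using mle[OF that] .
      moreover have "0 \<le> s" using msum unfolding s_def .
      ultimately show "0 \<le> bb e d + g d" unfolding g_def by auto
    qed
    ultimately have "\<exists>w. (\<forall>x\<in>C. 0 \<le> w x) \<and> sum w C = 1 \<and> (\<Sum>x\<in>C. w x *\<^sub>R x) = v0 + e"
      by (intro exI[of _ "\<lambda>d. bb e d + g d"]) simp
    then show ?thesis unfolding TC convex_hull_finite[OF finC] by simp
  qed
  have "(\<lambda>x. x + v0) ` Q = (\<lambda>x. v0 + x) ` (convex hull E)" unfolding QE by (simp add: add.commute)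
  also have "\<dots> = convex hull ((\<lambda>x. v0 + x) ` E)" by (simp add: convex_hull_translation)
  also have "\<dots> \<subseteq> T"
    using inT TC by (intro hull_minimal) (auto simp: convex_convex_hull)
  finally show ?thesis by blast
qed

end
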